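(* If Algorithm GP (described below), run on a graph $G$, returns a pair $(X,\mathcal{B})$, then $(X,\mathcal{B})$ is a good partition of $G$ (regardless of which admissible vertices are chosen in step (c)).
   Context: Definitions. Partitions are into nonempty blocks; $\mathcal{A}\sqsubseteq\mathcal{B}$ means every block of $\mathcal{A}$ is contained in a block of $\mathcal{B}$; $\mathsf{CC}(H)$ is the partition of $V(H)$ into vertex sets of connected components. For a maximal clique $X$ of a chordal graph $H$, $H$ is an $X$-interval graph if there is an ordering $(K_1,\dots,K_k,X)$ of all maximal cliques of $H$ ending with $X$ such that for each vertex the cliques containing it are consecutive. For $X\subseteq V(G)$, $Y\subseteq X$, a partition $\mathcal{B}$ of $V(G)\setminus X$, a block $B$ and $x\in Y$: $N(x)$ is minimal in $B$ for $Y$ if $N(x)\cap B\subseteq N(y)$ for all $y\in Y$; $x$ is removable from $Y$ for $\mathcal{B}$ if $N(x)$ is minimal for $Y$ in at least $|\mathcal{B}|-1$ blocks. A good partition of $G$ is a pair $(X,\mathcal{B})$, $X$ a maximal clique, $\mathcal{B}$ a partition of $V(G)\setminus X$, with (i) $\mathsf{CC}(G-X)\sqsubseteq\mathcal{B}$; (ii) $G[X\cup B]$ is an $X$-interval graph for all $B\in\mathcal{B}$; (iii) there is an ordering $(x_1,\dots,x_t)$ of $X$ with each $x_i$ removable from $\{x_i,\dots,x_t\}$ for $\mathcal{B}$. For $W\subseteq X$, $x\in W$ and a partition $\mathcal{A}$ of $V(G)\setminus X$, $\mathsf{notmin}(x,W,\mathcal{A})$ is the union of the blocks of $\mathcal{A}$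 in which $N(x)$ is not minimal for $W$. Algorithm GP on input $G$: if $G$ is not chordal, return "no". Otherwise, for each maximal clique $X$ of $G$: (a) if some component $C$ of $G-X$ has $G[X\cup C]$ not an $X$-interval graph, go to the next $X$; (b) set $\mathcal{A}\leftarrow\mathsf{CC}(G-X)$, $W\leftarrow X$; (c) while $W\neq\emptyset$: if there exists $w\in W$ such that $G[X\cup\mathsf{notmin}(w,W,\mathcal{A})]$ is an $X$-interval graph, choose any such $w$, replace the blocks of $\mathcal{A}$ contained in $\mathsf{notmin}(w,W,\mathcal{A})$ by their union, and set $W\leftarrow W\setminus\{w\}$; otherwise leave the while loop; (d) if $W=\emptyset$, return $(X,\mathcal{A})$. If no maximal clique led to a return, return "no". *)

theory Defs
  imports Main
begin

text \<open>A finite simple graph is given by a finite vertex set V and a symmetric,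
irreflexive adjacency relation E whose edges lie inside V.
Induced subgraphs G[S] are represented by (S, E).\<close>

definition graph :: "'a set \<Rightarrow> ('a \<Rightarrow> 'a \<Rightarrow> bool) \<Rightarrow> bool" where
  "graph V E \<longleftrightarrow> finite V \<and> (\<forall>u v. E u v \<longrightarrow> E v u) \<and> (\<forall>u. \<not> E u u)
     \<and> (\<forall>u v. E u v \<longrightarrow> u \<in> V \<and> v \<in> V)"

definition nbhd :: "'a set \<Rightarrow> ('a \<Rightarrow> 'a \<Rightarrow> bool) \<Rightarrow> 'a \<Rightarrow> 'a set" where
  "nbhd V E x = {y \<in> V. E x y}"

definition clique :: "'a set \<Rightarrow> ('a \<Rightarrow> 'a \<Rightarrow> bool) \<Rightarrow> 'a set \<Rightarrow> bool" where
  "clique S E K \<longleftrightarrow> K \<subseteq> S \<and> (\<forall>u\<in>K. \<forall>v\<in>K. u \<noteq> v \<longrightarrow> E u v)"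

definition max_clique :: "'a set \<Rightarrow> ('a \<Rightarrow> 'a \<Rightarrow> bool) \<Rightarrow> 'a set \<Rightarrow> bool" where
  "max_clique S E K \<longleftrightarrow> clique S E K \<and> (\<forall>K'. clique S E K' \<and> K \<subseteq> K' \<longrightarrow> K' = K)"

definition chordal :: "'a set \<Rightarrow> ('a \<Rightarrow> 'a \<Rightarrow> bool) \<Rightarrow> bool" where
  "chordal S E \<longleftrightarrow> \<not> (\<exists>cs. length cs \<ge> 4 \<and> distinct cs \<and> set cs \<subseteq> S
      \<and> (\<forall>i < length cs. E (cs ! i) (cs ! ((i + 1) mod length cs)))
      \<and> (\<forall>i < length cs. \<forall>j < length cs. E (cs ! i) (cs ! j) \<longrightarrow>
            j = (i + 1) mod length cs \<or> i = (j + 1) mod length cs))"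

definition X_interval :: "'a set \<Rightarrow> ('a \<Rightarrow> 'a \<Rightarrow> bool) \<Rightarrow> 'a set \<Rightarrow> bool" where
  "X_interval S E X \<longleftrightarrow> max_clique S E X \<and>
     (\<exists>Ks. distinct Ks \<and> set Ks = {K. max_clique S E K} \<and> Ks \<noteq> [] \<and> last Ks = X \<and>
        (\<forall>v\<in>S. \<forall>i j k. i \<le> j \<and> j \<le> k \<and> k < length Ks \<and> v \<in> Ks ! i \<and> v \<in> Ks ! k
             \<longrightarrow> v \<in> Ks ! j))"

definition reach :: "'a set \<Rightarrow> ('a \<Rightarrow> 'a \<Rightarrow> bool) \<Rightarrow> 'a \<Rightarrow> 'a \<Rightarrow> bool" where
  "reach S E = (\<lambda>u v. u \<in> S \<and> v \<in> S \<and> E u v)\<^sup>*\<^sup>*"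

definition CC :: "'a set \<Rightarrow> ('a \<Rightarrow> 'a \<Rightarrow> bool) \<Rightarrow> 'a set set" where
  "CC S E = (\<lambda>v. {u \<in> S. reach S E v u}) ` S"

definition is_partition :: "'a set set \<Rightarrow> 'a set \<Rightarrow> bool" where
  "is_partition P U \<longleftrightarrow> (\<forall>B\<in>P. B \<noteq> {}) \<and> \<Union>P = U \<and>
     (\<forall>B1\<in>P. \<forall>B2\<in>P. B1 \<noteq> B2 \<longrightarrow> B1 \<inter> B2 = {})"

definition refines :: "'a set set \<Rightarrow> 'a set set \<Rightarrow> bool" where
  "refines A B \<longleftrightarrow> (\<forall>a\<in>A. \<exists>b\<in>B. a \<subseteq> b)"

definition nbhd_minimal :: "'a set \<Rightarrow> ('a \<Rightarrow> 'a \<Rightarrow> bool) \<Rightarrow> 'a \<Rightarrow> 'a set \<Rightarrow> 'a set \<Rightarrow> bool" where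
  "nbhd_minimal V E x Y B \<longleftrightarrow> (\<forall>y\<in>Y. nbhd V E x \<inter> B \<subseteq> nbhd V E y)"

definition removable :: "'a set \<Rightarrow> ('a \<Rightarrow> 'a \<Rightarrow> bool) \<Rightarrow> 'a \<Rightarrow> 'a set \<Rightarrow> 'a set set \<Rightarrow> bool" where
  "removable V E x Y P \<longleftrightarrow> int (card {B \<in> P. nbhd_minimal V E x Y B}) \<ge> int (card P) - 1"

definition good_partition :: "'a set \<Rightarrow> ('a \<Rightarrow> 'a \<Rightarrow> bool) \<Rightarrow> 'a set \<Rightarrow> 'a set set \<Rightarrow> bool" where
  "good_partition V E X P \<longleftrightarrow> max_clique V E X \<and> is_partition P (V - X) \<and>
     refines (CC (V - X) E) P \<and>
     (\<forall>B\<in>P. X_interval (X \<union> B) E X) \<and>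
     (\<exists>xs. distinct xs \<and> set xs = X \<and>
        (\<forall>i < length xs. removable V E (xs ! i) (set (drop i xs)) P))"

definition notmin :: "'a set \<Rightarrow> ('a \<Rightarrow> 'a \<Rightarrow> bool) \<Rightarrow> 'a \<Rightarrow> 'a set \<Rightarrow> 'a set set \<Rightarrow> 'a set" where
  "notmin V E x W A = \<Union>{B \<in> A. \<not> nbhd_minimal V E x W B}"

definition merge_blocks :: "'a set set \<Rightarrow> 'a set \<Rightarrow> 'a set set" where
  "merge_blocks A N = {B \<in> A. \<not> B \<subseteq> N} \<union> (if \<Union>{B \<in> A. B \<subseteq> N} = {} then {}
       else {\<Union>{B \<in> A. B \<subseteq> N}})"

text \<open>One iteration of the while loop of step (c) for the clique X, for any admissible
choice of w.\<close>
inductive GP_step :: "'a set \<Rightarrow> ('a \<Rightarrow> 'a \<Rightarrow> bool) \<Rightarrow> 'a set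
    \<Rightarrow> 'a set set \<times> 'a set \<Rightarrow> 'a set set \<times> 'a set \<Rightarrow> bool"
  for V E X where
  "w \<in> W \<Longrightarrow> X_interval (X \<union> notmin V E w W A) E X \<Longrightarrow>
   GP_step V E X (A, W) (merge_blocks A (notmin V E w W A), W - {w})"

text \<open>Algorithm GP can return (X, A) on input G = (V, E): G is chordal, X is a maximal
clique passing the test of step (a), and some run of the loop (c), started from
(CC(G - X), X), reaches W = {} with current partition A.  Since the order in which the
maximal cliques are tried is arbitrary, every such X may be the clique processed first.\<close>
definition GP_returns :: "'a set \<Rightarrow> ('a \<Rightarrow> 'a \<Rightarrow> bool) \<Rightarrow> 'a set \<Rightarrow> 'a set set \<Rightarrow> bool" where
  "GP_returns V E X A \<longleftrightarrow> chordal V E \<and> max_clique V E X \<and>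
     (\<forall>C\<in>CC (V - X) E. X_interval (X \<union> C) E X) \<and>
     (GP_step V E X)\<^sup>*\<^sup>* (CC (V - X) E, X) (A, {})"

end

theory Submission
  imports Defs
begin

lemma refines_trans: "refines A B \<Longrightarrow> refines B C \<Longrightarrow> refines A C"
  unfolding refines_def by (meson subset_trans)

lemma refines_refl: "refines A A"
  unfolding refines_def by blast

lemma union_blocks_eq: "\<Union>{B \<in> A. B \<subseteq> \<Union>{B \<in> A. Q B}} = \<Union>{B \<in> A. Q B}"
  by blast

lemma merge_partition:
  assumes "is_partition A U"
  shows "is_partition (merge_blocks A N) U"
proof -
  let ?M = "\<Union>{B \<in> A. B \<subseteq> N}"
  have ne: "\<forall>B\<in>A. B \<noteq> {}" and un: "\<Union>A = U"
    and dj: "\<forall>B1\<in>A. \<forall>B2\<in>A. B1 \<noteq> B2 \<longrightarrow> B1 \<inter> B2 = {}"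
    using assms unfolding is_partition_def by blast+
  have "\<forall>B\<in>merge_blocks A N. B \<noteq> {}" unfolding merge_blocks_def using ne by auto
  moreover have "\<Union>(merge_blocks A N) = U"
  proof -
    have "\<Union>(merge_blocks A N) = \<Union>{B \<in> A. \<not> B \<subseteq> N} \<union> ?M"
      unfolding merge_blocks_def by auto
    also have "\<dots> = \<Union>A" by blast
    finally show ?thesis using un by simp
  qed
  moreover have "\<forall>B1\<in>merge_blocks A N. \<forall>B2\<in>merge_blocks A N. B1 \<noteq> B2 \<longrightarrow> B1 \<inter> B2 = {}"
  proof (intro ballI impI)
    fix B1 B2 assume b1: "B1 \<in> merge_blocks A N" and b2: "B2 \<in> merge_blocks A N" and d: "B1 \<noteq> B2"
    have c1: "(B1 \<in> A \<and> \<not> B1 \<subseteq> N) \<or> B1 = ?M" using b1 unfolding merge_blocks_def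
      by (auto split: if_splits)
    have c2: "(B2 \<in> A \<and> \<not> B2 \<subseteq> N) \<or> B2 = ?M" using b2 unfolding merge_blocks_def
      by (auto split: if_splits)
    have x: "B \<in> A \<Longrightarrow> \<not> B \<subseteq> N \<Longrightarrow> B \<inter> ?M = {}" for B
    proof -
      assume "B \<in> A" "\<not> B \<subseteq> N"
      then have "\<forall>B'\<in>{B \<in> A. B \<subseteq> N}. B \<inter> B' = {}" using dj by blast
      then show ?thesis by blast
    qed
    show "B1 \<inter> B2 = {}"
      using c1 c2 d dj x by (metis inf_commute)
  qed
  ultimately show ?thesis unfolding is_partition_def by blast
qed

lemma merge_refines:
  assumes "is_partition A U"
  shows "refines A (merge_blocks A N)"
proof -
  have ne: "\<forall>B\<in>A. B \<noteq> {}" using assms unfolding is_partition_def by blast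
  show ?thesis unfolding refines_def
  proof
    fix a assume a: "a \<in> A"
    show "\<exists>b\<in>merge_blocks A N. a \<subseteq> b"
    proof (cases "a \<subseteq> N")
      case True
      then have "a \<subseteq> \<Union>{B \<in> A. B \<subseteq> N}" "\<Union>{B \<in> A. B \<subseteq> N} \<noteq> {}" using a ne by blast+
      then show ?thesis unfolding merge_blocks_def by auto
    next
      case False
      then show ?thesis using a unfolding merge_blocks_def by auto
    qed
  qed
qed

lemma merge_interval:
  assumes "\<forall>B\<in>A. X_interval (X \<union> B) E X"
    and "X_interval (X \<union> notmin V E w W A) E X"
  shows "\<forall>B\<in>merge_blocks A (notmin V E w W A). X_interval (X \<union> B) E X"
proof -
  have "\<Union>{B \<in> A. B \<subseteq> notmin V E w W A} = notmin V E w W A"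
    unfolding notmin_def by (rule union_blocks_eq)
  then show ?thesis using assms unfolding merge_blocks_def by auto
qed

lemma key_removable:
  assumes A: "is_partition A U" and P: "is_partition P U" and fin: "finite U"
    and r: "refines (merge_blocks A (notmin V E w W A)) P"
  shows "removable V E w W P"
proof -
  let ?N = "notmin V E w W A"
  let ?M = "\<Union>{B \<in> A. B \<subseteq> ?N}"
  have finP: "finite P" using P fin unfolding is_partition_def
    by (metis Sup_upper finite_UnionD finite_subset)
  have sub: "{B \<in> P. \<not> nbhd_minimal V E w W B} \<subseteq> {B1}"
    if B1: "B1 \<in> P" "?M \<subseteq> B1" for B1
  proof
    fix B assume "B \<in> {B \<in> P. \<not> nbhd_minimal V E w W B}"
    then have BP: "B \<in> P" and nm: "\<not> nbhd_minimal V E w W B" by auto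
    then obtain y v where y: "y \<in> W" and v: "v \<in> nbhd V E w" "v \<in> B" "v \<notin> nbhd V E y"
      unfolding nbhd_minimal_def by blast
    have "v \<in> U" using BP v P unfolding is_partition_def by blast
    then obtain B0 where B0: "B0 \<in> A" "v \<in> B0" using A unfolding is_partition_def by blast
    have "\<not> nbhd_minimal V E w W B0" using B0 v y unfolding nbhd_minimal_def by blast
    then have "B0 \<subseteq> ?N" using B0 unfolding notmin_def by blast
    then have "v \<in> ?M" using B0 by blast
    then have "v \<in> B1" using B1 by blast
    then show "B \<in> {B1}" using BP B1 v P unfolding is_partition_def by blast
  qed
  have le1: "card {B \<in> P. \<not> nbhd_minimal V E w W B} \<le> 1"
  proof (cases "?M = {}")
    case True
    have "{B \<in> P. \<not> nbhd_minimal V E w W B} = {}"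
    proof (rule ccontr)
      assume "{B \<in> P. \<not> nbhd_minimal V E w W B} \<noteq> {}"
      then obtain B where BP: "B \<in> P" and nm: "\<not> nbhd_minimal V E w W B" by auto
      then obtain y v where y: "y \<in> W" and v: "v \<in> nbhd V E w" "v \<in> B" "v \<notin> nbhd V E y"
        unfolding nbhd_minimal_def by blast
      have "v \<in> U" using BP v P unfolding is_partition_def by blast
      then obtain B0 where B0: "B0 \<in> A" "v \<in> B0" using A unfolding is_partition_def by blast
      have "\<not> nbhd_minimal V E w W B0" using B0 v y unfolding nbhd_minimal_def by blast
      then have "B0 \<subseteq> ?N" using B0 unfolding notmin_def by blast
      then have "v \<in> ?M" using B0 by blast
      then show False using True by blast
    qed
    then show ?thesis by (metis card.empty zero_le_one)
  next
    case False
    then have "?M \<in> merge_blocks A ?N" unfolding merge_blocks_def by auto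
    then obtain B1 where "B1 \<in> P" "?M \<subseteq> B1" using r unfolding refines_def by blast
    note ss = sub[OF this]
    show ?thesis
    proof -
      have "card {B \<in> P. \<not> nbhd_minimal V E w W B} \<le> card {B1}"
        by (rule card_mono) (use ss in auto)
      then show ?thesis by simp
    qed
  qed
  have "card P = card {B \<in> P. nbhd_minimal V E w W B} + card {B \<in> P. \<not> nbhd_minimal V E w W B}"
  proof -
    have "P = {B \<in> P. nbhd_minimal V E w W B} \<union> {B \<in> P. \<not> nbhd_minimal V E w W B}" by blast
    then show ?thesis using finP
      by (metis (no_types, lifting) card_Un_disjoint disjoint_iff finite_Un mem_Collect_eq)
  qed
  then show ?thesis unfolding removable_def using le1 by linarith
qed

definition inv_GP where
  "inv_GP V E X A W \<longleftrightarrow> is_partition A (V - X) \<and> refines (CC (V - X) E) A \<and>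
     (\<forall>B\<in>A. X_interval (X \<union> B) E X) \<and> W \<subseteq> X \<and>
     (\<exists>xs. distinct xs \<and> set xs \<inter> W = {} \<and> set xs \<union> W = X \<and>
        (\<forall>i<length xs. \<forall>P. is_partition P (V - X) \<and> refines A P \<longrightarrow>
            removable V E (xs ! i) (set (drop i xs) \<union> W) P))"

lemma reach_sym:
  assumes "\<forall>u v. E u v \<longrightarrow> E v u" and "reach S E a b"
  shows "reach S E b a"
  using assms(2) unfolding reach_def
proof (induction rule: rtranclp_induct)
  case base then show ?case by simp
next
  case (step y z)
  then have "(\<lambda>u v. u \<in> S \<and> v \<in> S \<and> E u v) z y" using assms(1) by auto
  then show ?case using step.IH by (rule converse_rtranclp_into_rtranclp)
qed

lemma reach_trans: "reach S E a b \<Longrightarrow> reach S E b c \<Longrightarrow> reach S E a c"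
  unfolding reach_def by (rule rtranclp_trans)

lemma CC_partition:
  assumes "graph V E"
  shows "is_partition (CC S E) S"
proof -
  have sym: "\<forall>u v. E u v \<longrightarrow> E v u" using assms unfolding graph_def by blast
  have refl: "reach S E v v" for v unfolding reach_def by simp
  have ne: "\<forall>B\<in>CC S E. B \<noteq> {}" unfolding CC_def using refl by blast
  have un: "\<Union>(CC S E) = S" unfolding CC_def using refl by blast
  have dj: "\<forall>B1\<in>CC S E. \<forall>B2\<in>CC S E. B1 \<noteq> B2 \<longrightarrow> B1 \<inter> B2 = {}"
  proof (intro ballI impI)
    fix B1 B2 assume "B1 \<in> CC S E" "B2 \<in> CC S E" "B1 \<noteq> B2"
    then obtain a b where a: "B1 = {u \<in> S. reach S E a u}" and b: "B2 = {u \<in> S. reach S E b u}"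
      unfolding CC_def by blast
    show "B1 \<inter> B2 = {}"
    proof (rule ccontr)
      assume "B1 \<inter> B2 \<noteq> {}"
      then obtain c where "reach S E a c" "reach S E b c" using a b by blast
      then have ab: "reach S E a b" and ba: "reach S E b a"
        using reach_sym[OF sym] reach_trans by metis+
      have "B1 = B2" unfolding a b using ab ba reach_trans by auto
      then show False using \<open>B1 \<noteq> B2\<close> by simp
    qed
  qed
  show ?thesis unfolding is_partition_def using ne un dj by blast
qed

lemma inv_step:
  assumes fin: "finite V" and inv: "inv_GP V E X A W" and st: "GP_step V E X (A, W) (A', W')"
  shows "inv_GP V E X A' W'"
  using st
proof cases
  case (1 w)
  let ?N = "notmin V E w W A"
  have A': "A' = merge_blocks A ?N" and W': "W' = W - {w}" using 1 by auto
  from inv obtain xs where xs: "distinct xs" "set xs \<inter> W = {}" "set xs \<union> W = X"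
    and rem: "\<forall>i<length xs. \<forall>P. is_partition P (V - X) \<and> refines A P \<longrightarrow>
            removable V E (xs ! i) (set (drop i xs) \<union> W) P"
    unfolding inv_GP_def by blast
  have pA: "is_partition A (V - X)" using inv unfolding inv_GP_def by blast
  have p1: "is_partition A' (V - X)" using merge_partition[OF pA] A' by simp
  have p2: "refines (CC (V - X) E) A'" using inv merge_refines[OF pA] refines_trans A'
    unfolding inv_GP_def by metis
  have p3: "\<forall>B\<in>A'. X_interval (X \<union> B) E X" using merge_interval[of A X E V w W] inv 1 A'
    unfolding inv_GP_def by blast
  have p4: "W' \<subseteq> X" using inv W' unfolding inv_GP_def by blast
  let ?xs = "xs @ [w]"
  have q1: "distinct ?xs" "set ?xs \<inter> W' = {}" "set ?xs \<union> W' = X"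
    using xs 1 W' by auto
  have q2: "\<forall>i<length ?xs. \<forall>P. is_partition P (V - X) \<and> refines A' P \<longrightarrow>
            removable V E (?xs ! i) (set (drop i ?xs) \<union> W') P"
  proof (intro allI impI)
    fix i P assume i: "i < length ?xs" and P: "is_partition P (V - X) \<and> refines A' P"
    have rAP: "refines A P" using P merge_refines[OF pA] refines_trans A' by metis
    show "removable V E (?xs ! i) (set (drop i ?xs) \<union> W') P"
    proof (cases "i < length xs")
      case True
      have "set (drop i ?xs) \<union> W' = set (drop i xs) \<union> W" using True W' 1 by auto
      moreover have "?xs ! i = xs ! i" using True by (simp add: nth_append)
      ultimately show ?thesis using rem True P rAP by simp
    next
      case False
      then have ii: "i = length xs" using i by simp
      have "set (drop i ?xs) \<union> W' = W" using ii W' 1 by auto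
      moreover have "?xs ! i = w" using ii by simp
      moreover have "removable V E w W P"
        using key_removable[OF pA _ _ , of P V E w W] P A' fin by simp
      ultimately show ?thesis by simp
    qed
  qed
  show ?thesis unfolding inv_GP_def using p1 p2 p3 p4 q1 q2 by blast
qed

theorem lemma3:
  fixes V :: "'a set" and E :: "'a \<Rightarrow> 'a \<Rightarrow> bool"
  assumes "graph V E"
    and "GP_returns V E X P"
  shows "good_partition V E X P"
proof -
  have fin: "finite V" using assms(1) unfolding graph_def by blast
  have ret: "max_clique V E X" "\<forall>C\<in>CC (V - X) E. X_interval (X \<union> C) E X"
    "(GP_step V E X)\<^sup>*\<^sup>* (CC (V - X) E, X) (P, {})"
    using assms(2) unfolding GP_returns_def by blast+
  have init: "inv_GP V E X (CC (V - X) E) X"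
    unfolding inv_GP_def using CC_partition[OF assms(1)] refines_refl ret(2)
    by (auto intro!: exI[where x="[]"])
  have gen: "(GP_step V E X)\<^sup>*\<^sup>* (CC (V - X) E, X) s \<Longrightarrow> inv_GP V E X (fst s) (snd s)" for s
  proof (induction rule: rtranclp_induct)
    case base then show ?case using init by simp
  next
    case (step y z)
    then show ?case using inv_step[OF fin, of E X "fst y" "snd y" "fst z" "snd z"] by simp
  qed
  have I: "inv_GP V E X P {}" using gen[OF ret(3)] by simp
  then obtain xs where xs: "distinct xs" "set xs = X"
    and rem: "\<forall>i<length xs. \<forall>Q. is_partition Q (V - X) \<and> refines P Q \<longrightarrow>
            removable V E (xs ! i) (set (drop i xs)) Q"
    unfolding inv_GP_def by auto
  have pP: "is_partition P (V - X)" using I unfolding inv_GP_def by blast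
  have rP: "refines (CC (V - X) E) P" and iP: "\<forall>B\<in>P. X_interval (X \<union> B) E X"
    using I unfolding inv_GP_def by blast+
  have ex: "\<exists>xs. distinct xs \<and> set xs = X \<and>
        (\<forall>i < length xs. removable V E (xs ! i) (set (drop i xs)) P)"
  proof (intro exI conjI allI impI)
    show "distinct xs" "set xs = X" by (fact xs)+
    fix i assume "i < length xs"
    then show "removable V E (xs ! i) (set (drop i xs)) P"
      using rem pP refines_refl by blast
  qed
  show ?thesis unfolding good_partition_def
    using ret(1) pP rP iP ex by (intro conjI)
qed

end
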